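(* For all sets S and Y, τ : H_{S⊎Y} → H_S is a monad morphism, i.e. τ · η^{S⊎Y} = η^S and τ · f^{*}_{S⊎Y} = (τ · f)^{*}_{S} · τ for every f : X → H_{S⊎Y} Z.
   Context: For a set S, a trajectory over S is a pair ⟨I,e⟩ with I a downset of the extended non-negative reals of the form [0,d] (d a finite non-negative real) or [0,d) (d a non-negative real or ∞), and e : I → S. Let Trj_S be the monoid of trajectories with domain [0,d), d finite, under concatenation ⟨[0,d1),e1⟩⌢⟨[0,d2),e2⟩ = ⟨[0,d1+d2), λt. if t<d1 then e1^t else e2^{t−d1}⟩, with unit the empty trajectory ε = ⟨∅, !⟩. Define H_S X = (Trj_S × X) ∪ (set of all trajectories over S), written as triples ⟨I,e,x⟩ (I of the form [0,d), d finite) and pairs ⟨I,e⟩. This is a monad (generalized writer monad) with unit η^S(x) = ⟨ε,x⟩ and Kleisli lifting f^{*}_S(m,x) = (m⌢n, y) if f(x) = ⟨n,y⟩, f^{*}_S(m,x) = m⌢e if f(x) = e is a trajectory, and f^{*}_S(e) = e for a trajectory e. Define τ : H_{S⊎Y} X → H_S X by τ(I,e,x) = ⟨I,e',x⟩ if I = I', and ⟨I',e'⟩ otherwise; and τ(I,e) = ⟨I',e'⟩, where ⟨I',e'⟩ is the largest trajectory (prefix of ⟨I,e⟩) such that for all t ∈ I', e^t = inl e'^t. *)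

theory Defs
  imports Complex_Main "HOL-Library.FuncSet"
begin

text \<open>Trajectories over a set S (carrier of type 's): a pair (I, e) where I is a downset
of the non-negative reals of the form [0,d] (d finite, d \<ge> 0) or [0,d) (d \<ge> 0 real or
d = \<infinity>, the latter being [0,\<infinity>)), and e : I \<rightarrow> S. The function e is represented as a
total function real \<Rightarrow> 's that is canonically undefined outside I (extensional).\<close>

type_synonym 's trj = "real set \<times> (real \<Rightarrow> 's)"

definition is_dom :: "real set \<Rightarrow> bool" where
  "is_dom I \<longleftrightarrow> (\<exists>d\<ge>0. I = {0..d}) \<or> (\<exists>d\<ge>0. I = {0..<d}) \<or> I = {0..}"

definition is_trj :: "'s set \<Rightarrow> 's trj \<Rightarrow> bool" where
  "is_trj S p \<longleftrightarrow> is_dom (fst p) \<and> (\<forall>t\<in>fst p. snd p t \<in> S)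
                  \<and> (\<forall>t. t \<notin> fst p \<longrightarrow> snd p t = undefined)"

definition is_ftrj :: "'s set \<Rightarrow> 's trj \<Rightarrow> bool" where
  "is_ftrj S p \<longleftrightarrow> is_trj S p \<and> (\<exists>d\<ge>0. fst p = {0..<d})"

definition tlen :: "real set \<Rightarrow> real" where
  "tlen I = (if I = {} then 0 else Sup I)"

text \<open>Concatenation; the first argument has domain [0,d1), the second may be any trajectory.\<close>
definition cat :: "'s trj \<Rightarrow> 's trj \<Rightarrow> 's trj" where
  "cat p q = (let I1 = fst p; e1 = snd p; I2 = fst q; e2 = snd q; d1 = tlen I1 in
     (I1 \<union> (\<lambda>t. t + d1) ` I2,
      \<lambda>t. if t \<in> I1 then e1 t else if t - d1 \<in> I2 then e2 (t - d1) else undefined))"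

definition eps :: "'s trj" where
  "eps = ({}, \<lambda>_. undefined)"

text \<open>H_S X: Res m x  ~  triple \<langle>I,e,x\<rangle>;  Div e  ~  pair \<langle>I,e\<rangle>.\<close>
datatype ('s, 'x) H = Res "'s trj" 'x | Div "'s trj"

definition H_set :: "'s set \<Rightarrow> 'x set \<Rightarrow> ('s, 'x) H set" where
  "H_set S X = {Res m x | m x. is_ftrj S m \<and> x \<in> X} \<union> {Div e | e. is_trj S e}"

definition eta :: "'x \<Rightarrow> ('s, 'x) H" where
  "eta x = Res eps x"

fun kl :: "('x \<Rightarrow> ('s, 'z) H) \<Rightarrow> ('s, 'x) H \<Rightarrow> ('s, 'z) H" where
  "kl f (Res m x) = (case f x of Res n y \<Rightarrow> Res (cat m n) y | Div e \<Rightarrow> Div (cat m e))"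
| "kl f (Div e) = Div e"

definition inl_prefix_ok :: "('s + 'y) trj \<Rightarrow> 's trj \<Rightarrow> bool" where
  "inl_prefix_ok p q \<longleftrightarrow> fst q \<subseteq> fst p \<and> (\<forall>t\<in>fst q. snd p t = Inl (snd q t))"

definition inl_prefix :: "'s set \<Rightarrow> ('s + 'y) trj \<Rightarrow> 's trj" where
  "inl_prefix S p = (THE q. is_trj S q \<and> inl_prefix_ok p q \<and>
      (\<forall>q'. is_trj S q' \<and> inl_prefix_ok p q' \<longrightarrow> fst q' \<subseteq> fst q))"

fun tau :: "'s set \<Rightarrow> ('s + 'y, 'x) H \<Rightarrow> ('s, 'x) H" where
  "tau S (Res m x) = (let q = inl_prefix S m in if fst q = fst m then Res q x else Div q)"
| "tau S (Div e) = Div (inl_prefix S e)"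

end

theory Submission
  imports Defs
begin

definition pdom :: "('s + 'y) trj \<Rightarrow> real set" where
  "pdom p = {t. 0 \<le> t \<and> (\<forall>s. 0 \<le> s \<and> s \<le> t \<longrightarrow> s \<in> fst p \<and> isl (snd p s))}"

definition pfun :: "('s + 'y) trj \<Rightarrow> real \<Rightarrow> 's" where
  "pfun p = (\<lambda>t. if t \<in> pdom p then projl (snd p t) else undefined)"

definition vals :: "('s + 'y) set \<Rightarrow> ('s + 'y) trj \<Rightarrow> bool" where
  "vals T p \<longleftrightarrow> (\<forall>t\<in>fst p. snd p t \<in> T)"

lemma downset_is_dom:
  assumes "D \<subseteq> {0..}" "\<And>t s. t \<in> D \<Longrightarrow> 0 \<le> s \<Longrightarrow> s \<le> t \<Longrightarrow> s \<in> D"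
  shows "is_dom D"
proof (cases "D = {}")
  case True
  then show ?thesis unfolding is_dom_def by (intro disjI2 disjI1 exI[of _ 0]) auto
next
  case ne: False
  show ?thesis
  proof (cases "bdd_above D")
    case False
    have "D = {0..}"
    proof
      show "{0..} \<subseteq> D"
      proof
        fix x :: real assume x: "x \<in> {0..}"
        from False obtain t where "t \<in> D" "x < t" unfolding bdd_above_def
          by (meson not_le)
        then show "x \<in> D" using assms(2)[of t x] x by auto
      qed
    qed (use assms in auto)
    then show ?thesis unfolding is_dom_def by auto
  next
    case True
    define d where "d = Sup D"
    have ub: "t \<le> d" if "t \<in> D" for t using True that d_def by (simp add: cSup_upper)
    obtain t0 where t0: "t0 \<in> D" using ne by auto
    have d0: "0 \<le> d" using ub[OF t0] assms(1) t0 by auto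
    have below: "x \<in> D" if "0 \<le> x" "x < d" for x
    proof -
      from less_cSupE[of x D] ne that d_def obtain t where "t \<in> D" "x < t" by auto
      then show ?thesis using assms(2)[of t x] that by auto
    qed
    show ?thesis
    proof (cases "d \<in> D")
      case True
      have "D = {0..d}"
      proof (intro set_eqI iffI)
        fix x assume "x \<in> D" then show "x \<in> {0..d}" using ub assms(1) by auto
      next
        fix x assume x: "x \<in> {0..d}"
        show "x \<in> D"
        proof (cases "x = d")
          case True then show ?thesis using \<open>d \<in> D\<close> by simp
        next
          case False then show ?thesis using x below by auto
        qed
      qed
      then show ?thesis unfolding is_dom_def using d0 by auto
    next
      case False
      have "D = {0..<d}"
      proof (intro set_eqI iffI)
        fix x assume x: "x \<in> D"
        then have "x \<noteq> d" using False by auto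
        then show "x \<in> {0..<d}" using ub[OF x] x assms(1) by auto
      next
        fix x assume x: "x \<in> {0..<d}"
        then show "x \<in> D" using below by auto
      qed
      then show ?thesis unfolding is_dom_def using d0 by auto
    qed
  qed
qed

lemma is_dom_down: "is_dom I \<Longrightarrow> t \<in> I \<Longrightarrow> 0 \<le> s \<Longrightarrow> s \<le> t \<Longrightarrow> s \<in> I"
  unfolding is_dom_def by auto

lemma is_dom_nonneg: "is_dom I \<Longrightarrow> t \<in> I \<Longrightarrow> 0 \<le> t"
  unfolding is_dom_def by auto

lemma pdom_sub: "pdom p \<subseteq> fst p"
  unfolding pdom_def by auto

lemma pfun_in:
  assumes "vals (S <+> Y) p" "t \<in> pdom p"
  shows "pfun p t \<in> S"
proof -
  have "t \<in> fst p" "isl (snd p t)" using assms(2) unfolding pdom_def by auto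
  then have "snd p t \<in> S <+> Y" "isl (snd p t)" using assms(1) unfolding vals_def by auto
  then show ?thesis using assms(2) unfolding pfun_def by (auto simp: isl_def)
qed

lemma inl_prefix_eq:
  assumes "vals (S <+> Y) p"
  shows "inl_prefix S p = (pdom p, pfun p)"
  unfolding inl_prefix_def
proof (rule the_equality)
  have dom: "is_dom (pdom p)"
    by (rule downset_is_dom) (auto simp: pdom_def)
  show "is_trj S (pdom p, pfun p) \<and> inl_prefix_ok p (pdom p, pfun p) \<and>
    (\<forall>q'. is_trj S q' \<and> inl_prefix_ok p q' \<longrightarrow> fst q' \<subseteq> fst (pdom p, pfun p))"
  proof (intro conjI allI impI)
    show "is_trj S (pdom p, pfun p)"
      unfolding is_trj_def using dom pfun_in[OF assms]
      by (auto simp: pfun_def)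
    show "inl_prefix_ok p (pdom p, pfun p)"
      unfolding inl_prefix_ok_def using pdom_sub[of p]
      by (auto simp: pfun_def pdom_def isl_def)
    fix q' :: "'a trj" assume q': "is_trj S q' \<and> inl_prefix_ok p q'"
    show "fst q' \<subseteq> fst (pdom p, pfun p)"
    proof
      fix t assume t: "t \<in> fst q'"
      have "s \<in> fst p \<and> isl (snd p s)" if "0 \<le> s" "s \<le> t" for s
      proof -
        have "s \<in> fst q'" using is_dom_down[of "fst q'" t s] q' t that unfolding is_trj_def by auto
        then show ?thesis using q' unfolding inl_prefix_ok_def by auto
      qed
      moreover have "0 \<le> t" using is_dom_nonneg[of "fst q'" t] q' t unfolding is_trj_def by auto
      ultimately show "t \<in> fst (pdom p, pfun p)" by (auto simp: pdom_def)
    qed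
  qed
next
  fix q :: "'a trj"
  assume q: "is_trj S q \<and> inl_prefix_ok p q \<and>
    (\<forall>q'. is_trj S q' \<and> inl_prefix_ok p q' \<longrightarrow> fst q' \<subseteq> fst q)"
  have dom: "is_dom (pdom p)"
    by (rule downset_is_dom) (auto simp: pdom_def)
  have c1: "is_trj S (pdom p, pfun p)"
    unfolding is_trj_def using dom pfun_in[OF assms]
    by (auto simp: pfun_def)
  have c2: "inl_prefix_ok p (pdom p, pfun p)"
    unfolding inl_prefix_ok_def using pdom_sub[of p]
    by (auto simp: pfun_def pdom_def isl_def)
  have A: "pdom p \<subseteq> fst q" using q c1 c2 by fastforce
  have B: "fst q \<subseteq> pdom p"
  proof
    fix t assume t: "t \<in> fst q"
    have "s \<in> fst p \<and> isl (snd p s)" if "0 \<le> s" "s \<le> t" for s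
    proof -
      have "s \<in> fst q" using is_dom_down[of "fst q" t s] q t that unfolding is_trj_def by auto
      then show ?thesis using q unfolding inl_prefix_ok_def by auto
    qed
    moreover have "0 \<le> t" using is_dom_nonneg[of "fst q" t] q t unfolding is_trj_def by auto
    ultimately show "t \<in> pdom p" by (auto simp: pdom_def)
  qed
  have fq: "fst q = pdom p" using A B by auto
  have "snd q = pfun p"
  proof
    fix t show "snd q t = pfun p t"
    proof (cases "t \<in> pdom p")
      case True
      then have "snd p t = Inl (snd q t)" using q fq unfolding inl_prefix_ok_def by auto
      then show ?thesis using True by (simp add: pfun_def)
    next
      case False
      then show ?thesis using q fq unfolding is_trj_def pfun_def by auto
    qed
  qed
  then show "q = (pdom p, pfun p)" using fq by (metis prod.collapse)
qed


lemma tlen_lem: "(d::real) \<ge> 0 \<Longrightarrow> tlen {0..<d} = d"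
  unfolding tlen_def by (cases "d = 0") auto

lemma cat_eq:
  assumes "d \<ge> 0"
  shows "cat ({0..<d}, e1) (I2, e2) = ({0..<d} \<union> (\<lambda>t. t + d) ` I2,
    \<lambda>t. if t \<in> {0..<d} then e1 t else if t - d \<in> I2 then e2 (t - d) else undefined)"
proof -
  have T: "tlen {0..<d} = d" by (rule tlen_lem[OF assms])
  show ?thesis unfolding cat_def Let_def fst_conv snd_conv T by simp
qed

lemma notfull:
  assumes d: "d \<ge> 0" and nf: "pdom ({0..<d}, e1) \<noteq> {0..<d}"
  shows "pdom (cat ({0..<d}, e1) (I2, e2)) = pdom ({0..<d}, e1)
       \<and> pfun (cat ({0..<d}, e1) (I2, e2)) = pfun ({0..<d}, e1)"
proof -
  let ?m = "({0..<d}, e1)"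
  obtain t0 where t0: "t0 \<in> {0..<d}" "t0 \<notin> pdom ?m"
  proof -
    have "pdom ?m \<subseteq> {0..<d}" using pdom_sub[of ?m] by simp
    then show ?thesis using nf that by blast
  qed
  then obtain s0 where s0: "0 \<le> s0" "s0 \<le> t0" "\<not> isl (e1 s0)"
    unfolding pdom_def by auto
  have s0d: "s0 < d" using s0 t0 by auto
  have P: "pdom (cat ?m (I2, e2)) = pdom ?m"
  proof (intro set_eqI iffI)
    fix t assume t: "t \<in> pdom (cat ?m (I2, e2))"
    have "t < s0"
    proof (rule ccontr)
      assume "\<not> t < s0"
      then have "isl (snd (cat ?m (I2, e2)) s0)" using t s0 unfolding pdom_def by auto
      then show False using s0 s0d by (simp add: cat_eq[OF d])
    qed
    then show "t \<in> pdom ?m" using t s0d unfolding pdom_def by (auto simp: cat_eq[OF d])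
  next
    fix t assume t: "t \<in> pdom ?m"
    then show "t \<in> pdom (cat ?m (I2, e2))" unfolding pdom_def by (auto simp: cat_eq[OF d])
  qed
  have "pfun (cat ?m (I2, e2)) = pfun ?m"
  proof
    fix t show "pfun (cat ?m (I2, e2)) t = pfun ?m t"
      unfolding pfun_def P using pdom_sub[of ?m] by (auto simp: cat_eq[OF d])
  qed
  then show ?thesis using P by simp
qed

lemma full:
  assumes d: "d \<ge> 0" and fu: "pdom ({0..<d}, e1) = {0..<d}" and I2: "I2 \<subseteq> {0..}"
  shows "pdom (cat ({0..<d}, e1) (I2, e2)) = {0..<d} \<union> (\<lambda>t. t + d) ` pdom (I2, e2)
       \<and> cat (pdom ({0..<d}, e1), pfun ({0..<d}, e1)) (pdom (I2, e2), pfun (I2, e2))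
         = (pdom (cat ({0..<d}, e1) (I2, e2)), pfun (cat ({0..<d}, e1) (I2, e2)))"
proof -
  let ?m = "({0..<d}, e1)" and ?n = "(I2, e2)"
  have isl1: "isl (e1 t)" if "t \<in> {0..<d}" for t
    using that fu unfolding pdom_def by (metis (no_types, lifting) atLeastLessThan_iff mem_Collect_eq order_refl snd_conv)
  have P: "pdom (cat ?m ?n) = {0..<d} \<union> (\<lambda>t. t + d) ` pdom ?n"
  proof (intro set_eqI iffI)
    fix t assume t: "t \<in> pdom (cat ?m ?n)"
    show "t \<in> {0..<d} \<union> (\<lambda>t. t + d) ` pdom ?n"
    proof (cases "t < d")
      case True then show ?thesis using t unfolding pdom_def by auto
    next
      case False
      have "t - d \<in> pdom ?n" unfolding pdom_def
      proof (safe)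
        show "0 \<le> t - d" using False by auto
        fix s assume s: "0 \<le> s" "s \<le> t - d"
        then have "s + d \<in> fst (cat ?m ?n) \<and> isl (snd (cat ?m ?n) (s + d))"
          using t d unfolding pdom_def by auto
        then show "s \<in> fst ?n" "isl (snd ?n s)" using s d I2 by (auto simp: cat_eq[OF d])
      qed
      then have "t \<in> (\<lambda>t. t + d) ` pdom ?n" by (rule rev_image_eqI) simp
      then show ?thesis by simp
    qed
  next
    fix t assume t: "t \<in> {0..<d} \<union> (\<lambda>t. t + d) ` pdom ?n"
    show "t \<in> pdom (cat ?m ?n)"
    proof (cases "t < d")
      case True
      have "\<forall>u\<in>pdom ?n. 0 \<le> u" by (auto simp: pdom_def)
      then have "t \<in> {0..<d}" using t d True by auto
      then show ?thesis unfolding pdom_def using isl1 by (auto simp: cat_eq[OF d])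
    next
      case False
      then have "t \<notin> {0..<d}" by auto
      then obtain u where u: "u \<in> pdom ?n" "t = u + d" using t by blast
      have u0: "0 \<le> u" using u unfolding pdom_def by auto
      show ?thesis unfolding pdom_def
      proof (safe)
        show "0 \<le> t" using u u0 d by auto
        fix s assume s: "0 \<le> s" "s \<le> t"
        show "s \<in> fst (cat ?m ?n)" "isl (snd (cat ?m ?n) s)"
        proof -
          have "(s \<in> fst (cat ?m ?n) \<and> isl (snd (cat ?m ?n) s))"
          proof (cases "s < d")
            case True then show ?thesis using s isl1 by (auto simp: cat_eq[OF d])
          next
            case False
            then have "s - d \<in> I2 \<and> isl (e2 (s - d))" using u s unfolding pdom_def by auto
            moreover have "s \<in> (\<lambda>t. t + d) ` I2"
              using calculation by (intro rev_image_eqI[of "s - d"]) auto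
            ultimately show ?thesis using False by (auto simp: cat_eq[OF d])
          qed
          then show "s \<in> fst (cat ?m ?n)" "isl (snd (cat ?m ?n) s)" by auto
        qed
      qed
    qed
  qed
  have F: "pfun (cat ?m ?n) = (\<lambda>t. if t \<in> {0..<d} then pfun ?m t
            else if t - d \<in> pdom ?n then pfun ?n (t - d) else undefined)"
  proof
    fix t
    show "pfun (cat ?m ?n) t = (if t \<in> {0..<d} then pfun ?m t
            else if t - d \<in> pdom ?n then pfun ?n (t - d) else undefined)"
    proof (cases "t \<in> {0..<d}")
      case True then show ?thesis unfolding pfun_def P fu by (simp add: cat_eq[OF d])
    next
      case False
      have iff: "t \<in> (\<lambda>t. t + d) ` pdom ?n \<longleftrightarrow> t - d \<in> pdom ?n"
        by (auto intro: rev_image_eqI[of "t - d"])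
      show ?thesis
      proof (cases "t - d \<in> pdom ?n")
        case True
        then have "t - d \<in> I2" using pdom_sub[of ?n] by auto
        then show ?thesis unfolding pfun_def P using False True iff by (auto simp: cat_eq[OF d])
      next
        case F2: False
        then show ?thesis unfolding pfun_def P using False iff F2 by auto
      qed
    qed
  qed
  have "cat (pdom ?m, pfun ?m) (pdom ?n, pfun ?n) = ({0..<d} \<union> (\<lambda>t. t + d) ` pdom ?n,
     \<lambda>t. if t \<in> {0..<d} then pfun ?m t else if t - d \<in> pdom ?n then pfun ?n (t - d) else undefined)"
    unfolding fu by (rule cat_eq[OF d])
  then show ?thesis using P F by simp
qed

lemma vals_cat:
  assumes d: "d \<ge> 0" and "vals T ({0..<d}, e1)" "vals T (I2, e2)"
  shows "vals T (cat ({0..<d}, e1) (I2, e2))"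
  using assms unfolding vals_def by (auto simp: cat_eq[OF d])


lemma tau_res:
  assumes "vals (S <+> Y) m"
  shows "tau S (Res m x) = (if pdom m = fst m then Res (pdom m, pfun m) x else Div (pdom m, pfun m))"
  using inl_prefix_eq[OF assms] by simp

lemma full_iff:
  assumes d: "d \<ge> 0" and fu: "pdom ({0..<d}, e1) = {0..<d}" and I2: "I2 \<subseteq> {0..}"
  shows "(pdom (cat ({0..<d}, e1) (I2, e2)) = fst (cat ({0..<d}, e1) (I2, e2)))
     \<longleftrightarrow> pdom (I2, e2) = I2"
proof -
  have P: "pdom (cat ({0..<d}, e1) (I2, e2)) = {0..<d} \<union> (\<lambda>t. t + d) ` pdom (I2, e2)"
    using full[OF d fu I2] by blast
  have Fs: "fst (cat ({0..<d}, e1) (I2, e2)) = {0..<d} \<union> (\<lambda>t. t + d) ` I2"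
    by (simp add: cat_eq[OF d])
  have sub: "pdom (I2, e2) \<subseteq> I2" using pdom_sub[of "(I2, e2)"] by simp
  show ?thesis
  proof
    assume eq: "pdom (cat ({0..<d}, e1) (I2, e2)) = fst (cat ({0..<d}, e1) (I2, e2))"
    have "I2 \<subseteq> pdom (I2, e2)"
    proof
      fix u assume u: "u \<in> I2"
      then have "u + d \<in> {0..<d} \<union> (\<lambda>t. t + d) ` pdom (I2, e2)" using eq P Fs by auto
      moreover have "u + d \<notin> {0..<d}" using u I2 by auto
      ultimately show "u \<in> pdom (I2, e2)" by auto
    qed
    then show "pdom (I2, e2) = I2" using sub by auto
  next
    assume "pdom (I2, e2) = I2"
    then show "pdom (cat ({0..<d}, e1) (I2, e2)) = fst (cat ({0..<d}, e1) (I2, e2))"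
      using P Fs by simp
  qed
qed

lemma notfull_ne:
  assumes d: "d \<ge> 0" and nf: "pdom ({0..<d}, e1) \<noteq> {0..<d}"
  shows "pdom (cat ({0..<d}, e1) (I2, e2)) \<noteq> fst (cat ({0..<d}, e1) (I2, e2))"
proof -
  have P: "pdom (cat ({0..<d}, e1) (I2, e2)) = pdom ({0..<d}, e1)"
    using notfull[OF d nf] by blast
  have sub: "pdom ({0..<d}, e1) \<subseteq> {0..<d}" using pdom_sub[of "({0..<d}, e1)"] by simp
  then obtain t where "t \<in> {0..<d}" "t \<notin> pdom ({0..<d}, e1)" using nf by blast
  moreover have "fst (cat ({0..<d}, e1) (I2, e2)) \<supseteq> {0..<d}" by (simp add: cat_eq[OF d])
  ultimately show ?thesis using P by blast
qed

theorem lemma2: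
  fixes S :: "'s set" and Y :: "'y set" and X :: "'x set" and Z :: "'z set"
    and f :: "'x \<Rightarrow> ('s + 'y, 'z) H"
  assumes "f \<in> X \<rightarrow> H_set (S <+> Y) Z"
  shows "(\<forall>x\<in>X. tau S (eta x :: ('s + 'y, 'x) H) = eta x)
       \<and> (\<forall>m\<in>H_set (S <+> Y) X. tau S (kl f m) = kl (\<lambda>x. tau S (f x)) (tau S m))"
proof (intro conjI ballI)
  fix x :: 'x
  have v: "vals (S <+> Y) (eps :: ('s + 'y) trj)" by (simp add: vals_def eps_def)
  have pd: "pdom (eps :: ('s + 'y) trj) = {}" by (auto simp: pdom_def eps_def)
  have pf: "pfun (eps :: ('s + 'y) trj) = (\<lambda>_. undefined)" by (auto simp: pfun_def pd)
  show "tau S (eta x :: ('s + 'y, 'x) H) = eta x"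
    unfolding eta_def tau_res[OF v] pd pf by (simp add: eps_def)
next
  fix mm assume mm: "mm \<in> H_set (S <+> Y) X"
  let ?g = "\<lambda>x. tau S (f x)"
  show "tau S (kl f mm) = kl ?g (tau S mm)"
  proof (cases mm)
    case (Div e)
    have v: "vals (S <+> Y) e" using mm Div unfolding H_set_def is_trj_def vals_def by auto
    show ?thesis using Div inl_prefix_eq[OF v] by simp
  next
    case (Res m x)
    then have m: "is_ftrj (S <+> Y) m" and x: "x \<in> X" using mm unfolding H_set_def by auto
    obtain d e1 where md: "m = ({0..<d}, e1)" "d \<ge> 0" using m unfolding is_ftrj_def
      by (metis prod.collapse)
    have vm: "vals (S <+> Y) m" using m unfolding is_ftrj_def is_trj_def vals_def by auto
    have fx: "f x \<in> H_set (S <+> Y) Z" using assms x by auto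
    obtain n where n: "is_trj (S <+> Y) n" "f x = Div n \<or> (\<exists>y. f x = Res n y)"
      using fx unfolding H_set_def is_ftrj_def by auto
    obtain I2 e2 where nd: "n = (I2, e2)" by (metis prod.collapse)
    have vn: "vals (S <+> Y) n" using n unfolding is_trj_def vals_def by auto
    have I2: "I2 \<subseteq> {0..}" using n nd is_dom_nonneg unfolding is_trj_def by auto
    have vc: "vals (S <+> Y) (cat m n)" using vals_cat[OF md(2)] vm vn md nd by simp
    show ?thesis
    proof (cases "pdom m = fst m")
      case True
      have fu: "pdom ({0..<d}, e1) = {0..<d}" using True md by simp
      have C: "cat (pdom m, pfun m) (pdom n, pfun n) = (pdom (cat m n), pfun (cat m n))"
        using full[OF md(2) fu I2, of e2] md nd by simp
      have Iff: "(pdom (cat m n) = fst (cat m n)) \<longleftrightarrow> pdom n = fst n"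
        using full_iff[OF md(2) fu I2, of e2] md nd by simp
      from n(2) show ?thesis
      proof
        assume D: "f x = Div n"
        show ?thesis using D Res True C inl_prefix_eq[OF vn] inl_prefix_eq[OF vc] inl_prefix_eq[OF vm]
          by simp
      next
        assume "\<exists>y. f x = Res n y"
        then obtain y where D: "f x = Res n y" by auto
        show ?thesis
        proof (cases "pdom n = fst n")
          case T2: True
          then have C': "cat (pdom m, pfun m) (fst n, pfun n) = (pdom (cat m n), pfun (cat m n))"
            using C by simp
          show ?thesis using D Res True C' Iff T2 inl_prefix_eq[OF vn] inl_prefix_eq[OF vc] inl_prefix_eq[OF vm]
            by (simp add: Let_def)
        next
          case F2: False
          show ?thesis using D Res True C Iff F2 inl_prefix_eq[OF vn] inl_prefix_eq[OF vc] inl_prefix_eq[OF vm]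
            by (simp add: Let_def)
        qed
      qed
    next
      case False
      have nf: "pdom ({0..<d}, e1) \<noteq> {0..<d}" using False md by simp
      have C: "pdom (cat m n) = pdom m \<and> pfun (cat m n) = pfun m"
        using notfull[OF md(2) nf, of I2 e2] md nd by simp
      have ne: "pdom (cat m n) \<noteq> fst (cat m n)"
        using notfull_ne[OF md(2) nf, of I2 e2] md nd by simp
      from n(2) show ?thesis
      proof
        assume D: "f x = Div n"
        show ?thesis using D Res False C inl_prefix_eq[OF vc] inl_prefix_eq[OF vm]
          by simp
      next
        assume "\<exists>y. f x = Res n y"
        then obtain y where D: "f x = Res n y" by auto
        show ?thesis using D Res False C ne inl_prefix_eq[OF vc] inl_prefix_eq[OF vm]
          by simp
      qed
    qed
  qed
qed

end
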